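(* Let $G(n,n_1,n_2,n_3,p_1,p_2,p_3)$ be a three-layer stochastic block model network satisfying the standing assumptions below. Fix any one of the three layers as target layer, and apply RemoveEdge to all communities of the other two layers. Then the (expected) modularity of the target layer's partition in the resulting graph is strictly larger than in the original graph.
   Context: Multi-layer stochastic block model $G(n,n_1,\dots,n_L,p_1,\dots,p_L)$: a random graph on $n$ nodes with $L$ layers. For each layer $l$ the nodes are partitioned into $n_l$ planted communities of size $s_l=n/n_l$; independently for each layer, each pair of distinct nodes in a common community of layer $l$ receives an edge from layer $l$ with probability $p_l$; the graph is the simple union of all generated edges, so a pair lying in a common community of exactly the layers in a set $T$ is an edge with probability $1-\prod_{l\in T}(1-p_l)$. The partitions of different layers are independent: for any $k\ge2$ distinct layers and one community from each, their intersection has $n/(n_{l_1}\cdots n_{l_k})$ nodes (in expectation). Standing assumptions: $n_l\ge4$, $p_l\in[0.05,1]$ for every layer, and $n\ge2\prod_l n_l$. RemoveEdge applied to the communities of a layer $l$ deletes every edge whose two endpoints lie in a common community of layer $l$. Modularity of a layer $l$: for a graph with $e$ edges, if community $i$ of $l$ has $e^i_{ll}$ internal edges, $e^i_{lout}$ edges with exactly one endpoint in it, and $d^i_l=2e^i_{ll}+e^i_{lout}$, then $Q_l=\sum_i\big(\frac{e^i_{ll}}{e}-(\frac{d^i_l}{2e})^2\big)$; in the model all edge counts are replaced by their expected values (all communities of a layer having the same expected counts). *)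

theory Defs
  imports Complex_Main
begin

text \<open>Layers are indexed by a finite set Ls of naturals; nc l is the number n_l of
  communities of layer l, p l the edge probability p_l, n the number of nodes.
  R is the set of layers to whose communities RemoveEdge has been applied
  (R = {} is the original graph).\<close>

text \<open>Expected number of unordered pairs of distinct nodes lying in a common community of
  every layer of S: each node's intersection of communities has n / prod n_l nodes.\<close>
definition pairs_atleast :: "nat \<Rightarrow> (nat \<Rightarrow> nat) \<Rightarrow> nat set \<Rightarrow> real" where
  "pairs_atleast n nc S = real n * (real n / (\<Prod>l\<in>S. real (nc l)) - 1) / 2"

text \<open>Expected number of unordered pairs lying in a common community of exactly the
  layers in T (inclusion-exclusion).\<close>
definition pairs_exact :: "nat set \<Rightarrow> nat \<Rightarrow> (nat \<Rightarrow> nat) \<Rightarrow> nat set \<Rightarrow> real" where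
  "pairs_exact Ls n nc T =
     (\<Sum>S\<in>{S. T \<subseteq> S \<and> S \<subseteq> Ls}. (-1) ^ card (S - T) * pairs_atleast n nc S)"

text \<open>Probability that a pair of type T is an edge after RemoveEdge on the layers in R.\<close>
definition edge_prob :: "(nat \<Rightarrow> real) \<Rightarrow> nat set \<Rightarrow> nat set \<Rightarrow> real" where
  "edge_prob p R T = (if T \<inter> R = {} then 1 - (\<Prod>l\<in>T. 1 - p l) else 0)"

definition exp_edges_of_types ::
  "nat set \<Rightarrow> nat \<Rightarrow> (nat \<Rightarrow> nat) \<Rightarrow> (nat \<Rightarrow> real) \<Rightarrow> nat set \<Rightarrow> nat set set \<Rightarrow> real" where
  "exp_edges_of_types Ls n nc p R Ts = (\<Sum>T\<in>Ts. pairs_exact Ls n nc T * edge_prob p R T)"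

definition exp_edges :: "nat set \<Rightarrow> nat \<Rightarrow> (nat \<Rightarrow> nat) \<Rightarrow> (nat \<Rightarrow> real) \<Rightarrow> nat set \<Rightarrow> real" where
  "exp_edges Ls n nc p R = exp_edges_of_types Ls n nc p R (Pow Ls)"

text \<open>Expected number e_ll of internal edges of one community of layer l
  (all n_l communities having the same expected counts).\<close>
definition exp_internal ::
  "nat set \<Rightarrow> nat \<Rightarrow> (nat \<Rightarrow> nat) \<Rightarrow> (nat \<Rightarrow> real) \<Rightarrow> nat set \<Rightarrow> nat \<Rightarrow> real" where
  "exp_internal Ls n nc p R l =
     exp_edges_of_types Ls n nc p R {T \<in> Pow Ls. l \<in> T} / real (nc l)"

text \<open>Expected number e_lout of edges with exactly one endpoint in one community of layer l
  (each edge between two different communities of l touches two communities).\<close>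
definition exp_out ::
  "nat set \<Rightarrow> nat \<Rightarrow> (nat \<Rightarrow> nat) \<Rightarrow> (nat \<Rightarrow> real) \<Rightarrow> nat set \<Rightarrow> nat \<Rightarrow> real" where
  "exp_out Ls n nc p R l =
     2 * exp_edges_of_types Ls n nc p R {T \<in> Pow Ls. l \<notin> T} / real (nc l)"

definition exp_degree ::
  "nat set \<Rightarrow> nat \<Rightarrow> (nat \<Rightarrow> nat) \<Rightarrow> (nat \<Rightarrow> real) \<Rightarrow> nat set \<Rightarrow> nat \<Rightarrow> real" where
  "exp_degree Ls n nc p R l = 2 * exp_internal Ls n nc p R l + exp_out Ls n nc p R l"

definition modularity ::
  "nat set \<Rightarrow> nat \<Rightarrow> (nat \<Rightarrow> nat) \<Rightarrow> (nat \<Rightarrow> real) \<Rightarrow> nat set \<Rightarrow> nat \<Rightarrow> real" where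
  "modularity Ls n nc p R l =
     (let e = exp_edges Ls n nc p R in
      \<Sum>i<nc l. exp_internal Ls n nc p R l / e - (exp_degree Ls n nc p R l / (2 * e))^2)"

end

theory Submission
  imports Defs
begin
lemma sum_Pow_insert:
  assumes "a \<notin> A" "finite A"
  shows "sum f (Pow (insert a A)) = sum f (Pow A) + sum (\<lambda>S. f (insert a S)) (Pow A)"
proof -
  have d: "Pow A \<inter> insert a ` Pow A = {}" using assms by auto
  have i: "inj_on (insert a) (Pow A)"
  proof (rule inj_onI)
    fix x y assume "x \<in> Pow A" "y \<in> Pow A" "insert a x = insert a y"
    then show "x = y" using assms insert_ident[of a x y] by auto
  qed
  show ?thesis unfolding Pow_insert
    using d i assms by (simp add: sum.union_disjoint sum.reindex)
qed

lemma pe_alt: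
  assumes "T \<subseteq> Ls" "finite Ls"
  shows "pairs_exact Ls n nc T = (\<Sum>U\<in>Pow (Ls - T). (-1) ^ card U * pairs_atleast n nc (T \<union> U))"
  unfolding pairs_exact_def
proof (rule sum.reindex_bij_witness[where i="\<lambda>U. T \<union> U" and j="\<lambda>S. S - T"])
  fix S assume "S \<in> {S. T \<subseteq> S \<and> S \<subseteq> Ls}" thus "T \<union> (S - T) = S" by auto
next
  fix S assume "S \<in> {S. T \<subseteq> S \<and> S \<subseteq> Ls}" thus "S - T \<in> Pow (Ls - T)" by auto
next
  fix U assume "U \<in> Pow (Ls - T)" thus "T \<union> U - T = U" by auto
next
  fix U assume "U \<in> Pow (Ls - T)" thus "T \<union> U \<in> {S. T \<subseteq> S \<and> S \<subseteq> Ls}" using assms by auto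
next
  fix S assume "S \<in> {S. T \<subseteq> S \<and> S \<subseteq> Ls}"
  then have "T \<union> (S - T) = S" by auto
  then show "(-1) ^ card (S - T) * pairs_atleast n nc (T \<union> (S - T)) = (-1) ^ card (S - T) * pairs_atleast n nc S"
    by simp
qed

lemma pe0:
  assumes "\<forall>l\<in>{0::nat,1,2}. nc l > 0"
  shows "pairs_exact {0,1,2} n nc {0} = real n^2 * (real (nc 1) - 1) * (real (nc 2) - 1) / (2 * real (nc 0)*real (nc 1)*real (nc 2))"
proof -
  have "{0,1,2::nat} - {0} = {1,2}" by auto
  moreover have "nc 0 > 0" "nc 1 > 0" "nc 2 > 0" using assms by auto
  ultimately show ?thesis
    by (simp add: pe_alt sum_Pow_insert pairs_atleast_def field_simps power2_eq_square)
qed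

lemma pe1:
  assumes "\<forall>l\<in>{0::nat,1,2}. nc l > 0"
  shows "pairs_exact {0,1,2} n nc {1} = real n^2 * (real (nc 0) - 1) * (real (nc 2) - 1) / (2 * real (nc 0)*real (nc 1)*real (nc 2))"
proof -
  have "{0,1,2::nat} - {1} = {0,2}" by auto
  moreover have "nc 0 > 0" "nc 1 > 0" "nc 2 > 0" using assms by auto
  ultimately show ?thesis
    by (simp add: pe_alt sum_Pow_insert pairs_atleast_def field_simps power2_eq_square)
qed

lemma pe2:
  assumes "\<forall>l\<in>{0::nat,1,2}. nc l > 0"
  shows "pairs_exact {0,1,2} n nc {2} = real n^2 * (real (nc 0) - 1) * (real (nc 1) - 1) / (2 * real (nc 0)*real (nc 1)*real (nc 2))"
proof -
  have "{0,1,2::nat} - {2} = {0,1}" by auto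
  moreover have "nc 0 > 0" "nc 1 > 0" "nc 2 > 0" using assms by auto
  ultimately show ?thesis
    by (simp add: pe_alt sum_Pow_insert pairs_atleast_def field_simps power2_eq_square)
qed

lemma pe01:
  assumes "\<forall>l\<in>{0::nat,1,2}. nc l > 0"
  shows "pairs_exact {0,1,2} n nc {0,1} = real n^2 * (real (nc 2) - 1) / (2 * real (nc 0)*real (nc 1)*real (nc 2))"
proof -
  have "{0,1,2::nat} - {0,1} = {2}" by auto
  moreover have "nc 0 > 0" "nc 1 > 0" "nc 2 > 0" using assms by auto
  ultimately show ?thesis
    by (simp add: pe_alt sum_Pow_insert pairs_atleast_def field_simps power2_eq_square)
qed

lemma pe02:
  assumes "\<forall>l\<in>{0::nat,1,2}. nc l > 0"
  shows "pairs_exact {0,1,2} n nc {0,2} = real n^2 * (real (nc 1) - 1) / (2 * real (nc 0)*real (nc 1)*real (nc 2))"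
proof -
  have "{0,1,2::nat} - {0,2} = {1}" by auto
  moreover have "nc 0 > 0" "nc 1 > 0" "nc 2 > 0" using assms by auto
  ultimately show ?thesis
    by (simp add: pe_alt sum_Pow_insert pairs_atleast_def field_simps power2_eq_square)
qed

lemma pe12:
  assumes "\<forall>l\<in>{0::nat,1,2}. nc l > 0"
  shows "pairs_exact {0,1,2} n nc {1,2} = real n^2 * (real (nc 0) - 1) / (2 * real (nc 0)*real (nc 1)*real (nc 2))"
proof -
  have "{0,1,2::nat} - {1,2} = {0}" by auto
  moreover have "nc 0 > 0" "nc 1 > 0" "nc 2 > 0" using assms by auto
  ultimately show ?thesis
    by (simp add: pe_alt sum_Pow_insert pairs_atleast_def field_simps power2_eq_square)
qed

lemma pe012:
  assumes "\<forall>l\<in>{0::nat,1,2}. nc l > 0"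
  shows "pairs_exact {0,1,2} n nc {0,1,2} = real n * (real n - real (nc 0)*real (nc 1)*real (nc 2)) / (2 * real (nc 0)*real (nc 1)*real (nc 2))"
proof -
  have "{0,1,2::nat} - {0,1,2} = {}" by auto
  moreover have "nc 0 > 0" "nc 1 > 0" "nc 2 > 0" using assms by auto
  ultimately show ?thesis
    by (simp add: pe_alt sum_Pow_insert pairs_atleast_def field_simps power2_eq_square)
qed


lemma Pow3: "Pow {0,1,2::nat} = {{},{0},{1},{2},{0,1},{0,2},{1,2},{0,1,2}}"
  by (auto simp: Pow_insert)

lemma pe_nonneg:
  assumes "T \<in> Pow {0,1,2::nat}" "T \<noteq> {}"
    and "\<forall>l\<in>{0::nat, 1, 2}. 4 \<le> nc l"
    and "2 * (\<Prod>l\<in>{0::nat, 1, 2}. nc l) \<le> n"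
  shows "0 \<le> pairs_exact {0,1,2} n nc T"
proof -
  have pos: "\<forall>l\<in>{0::nat,1,2}. nc l > 0" using assms(3) by auto
  have x: "real (nc 0) \<ge> 4" "real (nc 1) \<ge> 4" "real (nc 2) \<ge> 4" using assms(3) by auto
  have h: "2 * (nc 0 * nc 1 * nc 2) \<le> n" using assms(4) by (simp add: mult.assoc)
  have "real (2 * (nc 0 * nc 1 * nc 2)) \<le> real n" using of_nat_le_iff[THEN iffD2, OF h] .
  then have N: "real (nc 0) * real (nc 1) * real (nc 2) \<le> real n" by simp
  have "T = {} \<or> T = {0} \<or> T = {1} \<or> T = {2} \<or> T = {0,1} \<or> T = {0,2} \<or> T = {1,2} \<or> T = {0,1,2}"
    using assms(1) unfolding Pow3 by (simp only: insert_iff empty_iff simp_thms)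
  with assms(2) consider "T = {0}" | "T = {1}" | "T = {2}" | "T = {0,1}" | "T = {0,2}" | "T = {1,2}" | "T = {0,1,2}" by argo
  then show ?thesis
  proof cases
    case 1
    have "0 \<le> pairs_exact {0,1,2} n nc {0}" unfolding pe0[OF pos] using x N
      by (intro divide_nonneg_pos mult_nonneg_nonneg) auto
    then show ?thesis using \<open>T = {0}\<close> by simp
  next
    case 2
    have "0 \<le> pairs_exact {0,1,2} n nc {1}" unfolding pe1[OF pos] using x N
      by (intro divide_nonneg_pos mult_nonneg_nonneg) auto
    then show ?thesis using \<open>T = {1}\<close> by simp
  next
    case 3
    have "0 \<le> pairs_exact {0,1,2} n nc {2}" unfolding pe2[OF pos] using x N
      by (intro divide_nonneg_pos mult_nonneg_nonneg) auto
    then show ?thesis using \<open>T = {2}\<close> by simp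
  next
    case 4
    have "0 \<le> pairs_exact {0,1,2} n nc {0,1}" unfolding pe01[OF pos] using x N
      by (intro divide_nonneg_pos mult_nonneg_nonneg) auto
    then show ?thesis using \<open>T = {0,1}\<close> by simp
  next
    case 5
    have "0 \<le> pairs_exact {0,1,2} n nc {0,2}" unfolding pe02[OF pos] using x N
      by (intro divide_nonneg_pos mult_nonneg_nonneg) auto
    then show ?thesis using \<open>T = {0,2}\<close> by simp
  next
    case 6
    have "0 \<le> pairs_exact {0,1,2} n nc {1,2}" unfolding pe12[OF pos] using x N
      by (intro divide_nonneg_pos mult_nonneg_nonneg) auto
    then show ?thesis using \<open>T = {1,2}\<close> by simp
  next
    case 7
    have "0 \<le> pairs_exact {0,1,2} n nc {0,1,2}" unfolding pe012[OF pos] using x N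
      by (intro divide_nonneg_pos mult_nonneg_nonneg) auto
    then show ?thesis using \<open>T = {0,1,2}\<close> by simp
  qed
qed

lemma pe_pos:
  assumes "s \<in> {0,1,2::nat}"
    and "\<forall>l\<in>{0::nat, 1, 2}. 4 \<le> nc l"
    and "2 * (\<Prod>l\<in>{0::nat, 1, 2}. nc l) \<le> n"
  shows "0 < pairs_exact {0,1,2} n nc {s}"
proof -
  have pos: "\<forall>l\<in>{0::nat,1,2}. nc l > 0" using assms(2) by auto
  have x: "real (nc 0) \<ge> 4" "real (nc 1) \<ge> 4" "real (nc 2) \<ge> 4" using assms(2) by auto
  have h: "2 * (nc 0 * nc 1 * nc 2) \<le> n" using assms(3) by (simp add: mult.assoc)
  have "real (2 * (nc 0 * nc 1 * nc 2)) \<le> real n" using of_nat_le_iff[THEN iffD2, OF h] .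
  then have N: "real (nc 0) * real (nc 1) * real (nc 2) \<le> real n" by simp
  have "0 < real (nc 0) * real (nc 1) * real (nc 2)" using x by simp
  with N have "real n > 0" by linarith
  then have np: "real n > 0" .
  have "0 < pairs_exact {0,1,2} n nc {0}" unfolding pe0[OF pos] using x np
    by (intro divide_pos_pos mult_pos_pos) auto
  moreover have "0 < pairs_exact {0,1,2} n nc {1}" unfolding pe1[OF pos] using x np
    by (intro divide_pos_pos mult_pos_pos) auto
  moreover have "0 < pairs_exact {0,1,2} n nc {2}" unfolding pe2[OF pos] using x np
    by (intro divide_pos_pos mult_pos_pos) auto
  ultimately show ?thesis using assms(1) by auto
qed

lemma edges_split:
  assumes "finite Ls"
  shows "exp_edges Ls n nc p R = exp_edges_of_types Ls n nc p R {T\<in>Pow Ls. t\<in>T} + exp_edges_of_types Ls n nc p R {T\<in>Pow Ls. t\<notin>T}"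
proof -
  have "Pow Ls = {T\<in>Pow Ls. t\<in>T} \<union> {T\<in>Pow Ls. t\<notin>T}" by auto
  moreover have "{T\<in>Pow Ls. t\<in>T} \<inter> {T\<in>Pow Ls. t\<notin>T} = {}" by auto
  ultimately show ?thesis unfolding exp_edges_def exp_edges_of_types_def
    using assms by (metis (no_types, lifting) finite_Pow_iff finite_Un sum.union_disjoint)
qed

lemma mod_formula:
  assumes "finite Ls" "nc t > 0"
    and "exp_edges_of_types Ls n nc p R {T\<in>Pow Ls. t\<in>T} + exp_edges_of_types Ls n nc p R {T\<in>Pow Ls. t\<notin>T} \<noteq> 0"
  shows "modularity Ls n nc p R t =
    exp_edges_of_types Ls n nc p R {T\<in>Pow Ls. t\<in>T} /
      (exp_edges_of_types Ls n nc p R {T\<in>Pow Ls. t\<in>T} + exp_edges_of_types Ls n nc p R {T\<in>Pow Ls. t\<notin>T})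
    - 1 / real (nc t)"
proof -
  define I where "I = exp_edges_of_types Ls n nc p R {T\<in>Pow Ls. t\<in>T}"
  define Ou where "Ou = exp_edges_of_types Ls n nc p R {T\<in>Pow Ls. t\<notin>T}"
  define a where "a = real (nc t)"
  have a: "a > 0" using assms(2) a_def by simp
  have e: "I + Ou \<noteq> 0" using assms(3) I_def Ou_def by simp
  have "modularity Ls n nc p R t = a * (I / a / (I + Ou) - ((2 * (I / a) + 2 * Ou / a) / (2 * (I + Ou)))^2)"
    unfolding modularity_def Let_def edges_split[OF assms(1), of n nc p R t] exp_degree_def exp_internal_def exp_out_def
    by (simp add: I_def Ou_def a_def)
  also have "(2 * (I / a) + 2 * Ou / a) / (2 * (I + Ou)) = 1 / a"
  proof -
    have "2 * (I / a) + 2 * Ou / a = 2 * (I + Ou) / a" using a by (simp add: field_simps)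
    then show ?thesis using a e by simp
  qed
  also have "a * (I / a / (I + Ou) - (1/a)^2) = I / (I + Ou) - 1 / a"
  proof -
    have "a * (I / a / (I + Ou)) = I / (I + Ou)" using a by simp
    moreover have "a * (1/a)^2 = 1 / a" using a by (simp add: power2_eq_square)
    ultimately show ?thesis by (simp add: right_diff_distrib)
  qed
  finally show ?thesis by (simp add: I_def Ou_def a_def)
qed

theorem theorem13:
  fixes n :: nat and nc :: "nat \<Rightarrow> nat" and p :: "nat \<Rightarrow> real" and t :: nat
  assumes "t \<in> {0, 1, 2}"
    and "\<forall>l\<in>{0::nat, 1, 2}. 4 \<le> nc l"
    and "\<forall>l\<in>{0::nat, 1, 2}. 0.05 \<le> p l \<and> p l \<le> 1"
    and "2 * (\<Prod>l\<in>{0::nat, 1, 2}. nc l) \<le> n"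
  shows "modularity {0, 1, 2} n nc p ({0, 1, 2} - {t}) t > modularity {0, 1, 2} n nc p {} t"
proof -
  define Ls :: "nat set" where "Ls = {0,1,2}"
  define R' where "R' = Ls - {t}"
  have fin: "finite Ls" by (simp add: Ls_def)
  have a4: "real (nc t) \<ge> 4" using assms(1,2) by auto
  then have ncpos: "nc t > 0" by simp
  have pt: "p t > 0" using assms(1,3) by auto
  have ptI: "pairs_exact Ls n nc {t} > 0" using pe_pos[OF assms(1,2,4)] by (simp add: Ls_def)
  define I' where "I' = exp_edges_of_types Ls n nc p R' {T\<in>Pow Ls. t\<in>T}"
  define Ou' where "Ou' = exp_edges_of_types Ls n nc p R' {T\<in>Pow Ls. t\<notin>T}"
  have Ou'0: "Ou' = 0" unfolding Ou'_def exp_edges_of_types_def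
  proof (rule sum.neutral, rule ballI)
    fix T assume T: "T \<in> {T\<in>Pow Ls. t\<notin>T}"
    show "pairs_exact Ls n nc T * edge_prob p R' T = 0"
    proof (cases "T = {}")
      case True then show ?thesis by (simp add: edge_prob_def)
    next
      case False
      then have "T \<inter> R' \<noteq> {}" using T by (auto simp: R'_def)
      then show ?thesis by (simp add: edge_prob_def)
    qed
  qed
  have I'v: "I' = pairs_exact Ls n nc {t} * p t"
  proof -
    have tin: "{t} \<in> {T\<in>Pow Ls. t\<in>T}" using assms(1) by (auto simp: Ls_def)
    have fin2: "finite {T\<in>Pow Ls. t\<in>T}" using fin by simp
    have "I' = pairs_exact Ls n nc {t} * edge_prob p R' {t} + (\<Sum>T\<in>{T\<in>Pow Ls. t\<in>T} - {{t}}. pairs_exact Ls n nc T * edge_prob p R' T)"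
      unfolding I'_def exp_edges_of_types_def using sum.remove[OF fin2 tin] by blast
    also have "(\<Sum>T\<in>{T\<in>Pow Ls. t\<in>T} - {{t}}. pairs_exact Ls n nc T * edge_prob p R' T) = 0"
    proof (rule sum.neutral, rule ballI)
      fix T assume T: "T \<in> {T\<in>Pow Ls. t\<in>T} - {{t}}"
      then have "T \<inter> R' \<noteq> {}" by (auto simp: R'_def)
      then show "pairs_exact Ls n nc T * edge_prob p R' T = 0" by (simp add: edge_prob_def)
    qed
    also have "edge_prob p R' {t} = p t" by (simp add: edge_prob_def R'_def)
    finally show ?thesis by simp
  qed
  have I'pos: "I' > 0" using I'v ptI pt by simp
  have Q': "modularity Ls n nc p R' t = 1 - 1 / real (nc t)"
    using mod_formula[where Ls=Ls and nc=nc and t=t and n=n and p=p and R=R', OF fin ncpos] I'pos Ou'0 unfolding I'_def Ou'_def by simp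
  define I where "I = exp_edges_of_types Ls n nc p {} {T\<in>Pow Ls. t\<in>T}"
  define Ou where "Ou = exp_edges_of_types Ls n nc p {} {T\<in>Pow Ls. t\<notin>T}"
  have term_nn: "0 \<le> pairs_exact Ls n nc T * edge_prob p {} T" if "T \<in> Pow Ls" for T
  proof (cases "T = {}")
    case True then show ?thesis by (simp add: edge_prob_def)
  next
    case False
    have "0 \<le> pairs_exact Ls n nc T" using pe_nonneg[OF _ False assms(2,4)] that by (simp add: Ls_def)
    moreover have "(\<Prod>l\<in>T. 1 - p l) \<le> 1"
      using that assms(3) by (intro prod_le_1) (auto simp: Ls_def)
    ultimately show ?thesis by (simp add: edge_prob_def)
  qed
  have Inn: "I \<ge> 0" unfolding I_def exp_edges_of_types_def using term_nn by (intro sum_nonneg) auto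
  define s where "s = (if t = 0 then 1 else (0::nat))"
  have s: "s \<in> {0,1,2}" "s \<noteq> t" by (auto simp: s_def)
  have sin: "{s} \<in> {T\<in>Pow Ls. t\<notin>T}" using s by (auto simp: Ls_def)
  have "0 < pairs_exact Ls n nc {s} * edge_prob p {} {s}"
    using pe_pos[OF s(1) assms(2,4)] assms(3) s(1) by (auto simp: Ls_def edge_prob_def)
  also have "\<dots> \<le> Ou" unfolding Ou_def exp_edges_of_types_def
    using fin term_nn sin by (intro member_le_sum) auto
  finally have Opos: "Ou > 0" .
  have Q: "modularity Ls n nc p {} t = I / (I + Ou) - 1 / real (nc t)"
    using mod_formula[where Ls=Ls and nc=nc and t=t and n=n and p=p and R="{}", OF fin ncpos] Inn Opos unfolding I_def Ou_def by simp
  have "I / (I + Ou) < 1" using Inn Opos by simp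
  then show ?thesis using Q Q' by (simp add: Ls_def R'_def)
qed

end
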